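(* Let $\mu \vdash n$ with transpose $\mu'$. Define $\underline{d}_0 = 1$ and $\underline{d}_i = \underline{d}_{i-1} + (\mu'_i - 1)$ for $1 \leq i \leq \mu_1 - 1$. Then the Tanisaki ideal $\mathcal{I}_\mu$ is generated by the polynomials $\sigma \cdot g$ for $\sigma \in \mathfrak{S}_n$ and \[ g \in \{ e_{\underline{d}_1}(x_1, \ldots, x_{n-1}),\ e_{\underline{d}_2}(x_1, \ldots, x_{n-2}),\ \ldots,\ e_{\underline{d}_{\mu_1 - 1}}(x_1, \ldots, x_{n-\mu_1+1}),\ e_1(x_1, \ldots, x_n), \ldots, e_n(x_1, \ldots, x_n)\}. \]
   Context: $\mathfrak{S}_n$ acts on $\mathbb{Q}[x_1, \ldots, x_n]$ by $\sigma \cdot x_i = x_{\sigma(i)}$. For $S \subset [n]$, $e_r(S)$ is the elementary symmetric polynomial of degree $r$ in the variables $\{x_i : i \in S\}$. With $\mu'$ padded by zeros to have $n$ entries, let $d_k(\mu) = \mu'_n + \mu'_{n-1} + \cdots + \mu'_{n-k+1}$. The Tanisaki ideal is $\mathcal{I}_\mu = \langle e_r(S) : S \subset [n],\ |S| - d_{|S|}(\mu) < r \leq |S| \rangle \subset \mathbb{Q}[x_1, \ldots, x_n]$. *)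

theory Defs
  imports Complex_Main "HOL-Library.Poly_Mapping" "HOL-Combinatorics.Permutations"
begin

text \<open>Multivariate polynomials over the rationals: monomials are finitely supported
  exponent vectors \<open>nat \<Rightarrow>\<^sub>0 nat\<close> (variable \<open>x_i\<close> has index \<open>i\<close>), polynomials are
  finitely supported coefficient functions on monomials.\<close>
type_synonym mpoly = "(nat \<Rightarrow>\<^sub>0 nat) \<Rightarrow>\<^sub>0 rat"

definition Var :: "nat \<Rightarrow> mpoly" where
  "Var i = Poly_Mapping.single (Poly_Mapping.single i 1) 1"

definition poly_ring :: "nat \<Rightarrow> mpoly set" where
  "poly_ring n = {p. \<forall>m \<in> Poly_Mapping.keys p. Poly_Mapping.keys m \<subseteq> {1..n}}"

definition ideal_in :: "mpoly set \<Rightarrow> mpoly set \<Rightarrow> mpoly set" where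
  "ideal_in R S = {(\<Sum>g\<in>G. c g * g) | G c. finite G \<and> G \<subseteq> S \<and> (\<forall>g\<in>G. c g \<in> R)}"

text \<open>Action of a permutation: sigma . x_i = x_(sigma i); the monomial m goes to m o inv sigma.\<close>
definition perm_act :: "(nat \<Rightarrow> nat) \<Rightarrow> mpoly \<Rightarrow> mpoly" where
  "perm_act \<sigma> p = Poly_Mapping.map_key (Poly_Mapping.map_key \<sigma>) p"

definition esym :: "nat \<Rightarrow> nat set \<Rightarrow> mpoly" where
  "esym r S = (\<Sum>T \<in> {T. T \<subseteq> S \<and> card T = r}. \<Prod>i\<in>T. Var i)"

definition is_partition :: "nat list \<Rightarrow> nat \<Rightarrow> bool" where
  "is_partition \<mu> n \<longleftrightarrow> sorted_wrt (\<ge>) \<mu> \<and> (\<forall>x\<in>set \<mu>. 0 < x) \<and> sum_list \<mu> = n"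

text \<open>Transpose: conj mu i = mu'_i (1-indexed), zero-padded.\<close>
definition conj :: "nat list \<Rightarrow> nat \<Rightarrow> nat" where
  "conj \<mu> i = card {j. j < length \<mu> \<and> i \<le> \<mu> ! j}"

text \<open>First part mu_1 (0 for the empty partition).\<close>
definition part1 :: "nat list \<Rightarrow> nat" where
  "part1 \<mu> = (if \<mu> = [] then 0 else \<mu> ! 0)"

definition dk :: "nat list \<Rightarrow> nat \<Rightarrow> nat \<Rightarrow> nat" where
  "dk \<mu> n k = (\<Sum>i\<in>{n-k+1..n}. conj \<mu> i)"

definition tanisaki_gens :: "nat list \<Rightarrow> nat \<Rightarrow> mpoly set" where
  "tanisaki_gens \<mu> n = {esym r S | r S. S \<subseteq> {1..n} \<and>
      int (card S) - int (dk \<mu> n (card S)) < int r \<and> r \<le> card S}"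

definition tanisaki_ideal :: "nat list \<Rightarrow> nat \<Rightarrow> mpoly set" where
  "tanisaki_ideal \<mu> n = ideal_in (poly_ring n) (tanisaki_gens \<mu> n)"

text \<open>underline d_i: d_0 = 1, d_i = d_(i-1) + (mu'_i - 1).\<close>
definition dunder :: "nat list \<Rightarrow> nat \<Rightarrow> nat" where
  "dunder \<mu> i = 1 + (\<Sum>j\<in>{1..i}. (conj \<mu> j - 1))"

end

theory Submission
  imports Defs
begin

lemma ideal_zero: "0 \<in> ideal_in R A"
  unfolding ideal_in_def by (rule CollectI, rule exI[of _ "{}"], auto)

lemma ideal_gen: "1 \<in> R \<Longrightarrow> g \<in> A \<Longrightarrow> g \<in> ideal_in R A"
  unfolding ideal_in_def
  by (rule CollectI, rule exI[of _ "{g}"], rule exI[of _ "\<lambda>_. 1"], auto)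

lemma ideal_mult:
  assumes "\<And>a b. a \<in> R \<Longrightarrow> b \<in> R \<Longrightarrow> a * b \<in> R" "r \<in> R" "p \<in> ideal_in R A"
  shows "r * p \<in> ideal_in R A"
proof -
  from assms(3) obtain G c where G: "p = (\<Sum>g\<in>G. c g * g)" "finite G" "G \<subseteq> A" "\<forall>g\<in>G. c g \<in> R"
    unfolding ideal_in_def by blast
  have "r * p = (\<Sum>g\<in>G. (r * c g) * g)" using G(1) by (simp add: sum_distrib_left mult.assoc)
  moreover have "\<forall>g\<in>G. r * c g \<in> R" using G(4) assms(1,2) by blast
  ultimately show ?thesis using G(2,3) unfolding ideal_in_def mem_Collect_eq
    by (intro exI[of _ G] exI[of _ "\<lambda>g. r * c g"]) simp
qed

lemma ideal_add:
  assumes "\<And>a b. a \<in> R \<Longrightarrow> b \<in> R \<Longrightarrow> a + b \<in> R" "0 \<in> R"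
    "p \<in> ideal_in R A" "q \<in> ideal_in R A"
  shows "p + q \<in> ideal_in R A"
proof -
  from assms(3) obtain G c where G: "p = (\<Sum>g\<in>G. c g * g)" "finite G" "G \<subseteq> A" "\<forall>g\<in>G. c g \<in> R"
    unfolding ideal_in_def by blast
  from assms(4) obtain H d where H: "q = (\<Sum>g\<in>H. d g * g)" "finite H" "H \<subseteq> A" "\<forall>g\<in>H. d g \<in> R"
    unfolding ideal_in_def by blast
  define e where "e g = (if g \<in> G then c g else 0) + (if g \<in> H then d g else 0)" for g
  have 1: "(\<Sum>g\<in>G\<union>H. (if g \<in> G then c g else 0) * g) = p"
    unfolding G(1) using G(2) H(2)
    by (intro sum.mono_neutral_cong_right) auto
  have 2: "(\<Sum>g\<in>G\<union>H. (if g \<in> H then d g else 0) * g) = q"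
    unfolding H(1) using G(2) H(2)
    by (intro sum.mono_neutral_cong_right) auto
  have "p + q = (\<Sum>g\<in>G\<union>H. e g * g)"
    unfolding e_def distrib_right sum.distrib 1 2 ..
  moreover have "\<forall>g\<in>G\<union>H. e g \<in> R" using G(4) H(4) assms(1,2) unfolding e_def by auto
  moreover have "finite (G \<union> H)" "G \<union> H \<subseteq> A" using G H by auto
  ultimately show ?thesis unfolding ideal_in_def mem_Collect_eq
    by (intro exI[of _ "G \<union> H"] exI[of _ e]) simp
qed

lemma ideal_mono:
  assumes "\<And>a b. a \<in> R \<Longrightarrow> b \<in> R \<Longrightarrow> a + b \<in> R" "0 \<in> R"
    "\<And>a b. a \<in> R \<Longrightarrow> b \<in> R \<Longrightarrow> a * b \<in> R" "A \<subseteq> ideal_in R B"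
  shows "ideal_in R A \<subseteq> ideal_in R B"
proof
  fix p assume "p \<in> ideal_in R A"
  then obtain G c where G: "p = (\<Sum>g\<in>G. c g * g)" "finite G" "G \<subseteq> A" "\<forall>g\<in>G. c g \<in> R"
    unfolding ideal_in_def by blast
  have "(\<Sum>g\<in>G. c g * g) \<in> ideal_in R B" using G(2-4)
  proof (induction G rule: finite_induct)
    case empty then show ?case using ideal_zero by simp
  next
    case (insert x F)
    then show ?case using assms by (auto intro!: ideal_add ideal_mult)
  qed
  thus "p \<in> ideal_in R B" using G(1) by simp
qed

lemma pr_zero: "0 \<in> poly_ring n" unfolding poly_ring_def by simp
lemma pr_one: "1 \<in> poly_ring n" unfolding poly_ring_def by simp
lemma pr_add: "a \<in> poly_ring n \<Longrightarrow> b \<in> poly_ring n \<Longrightarrow> a + b \<in> poly_ring n"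
proof -
  assume a: "a \<in> poly_ring n" and b: "b \<in> poly_ring n"
  { fix m assume "m \<in> Poly_Mapping.keys (a + b)"
    hence "m \<in> Poly_Mapping.keys a \<or> m \<in> Poly_Mapping.keys b" using keys_add[of a b] by blast
    hence "Poly_Mapping.keys m \<subseteq> {1..n}" using a b unfolding poly_ring_def by blast }
  thus ?thesis unfolding poly_ring_def by blast
qed
lemma pr_uminus: "a \<in> poly_ring n \<Longrightarrow> - a \<in> poly_ring n"
  unfolding poly_ring_def by simp
lemma pr_mult: "a \<in> poly_ring n \<Longrightarrow> b \<in> poly_ring n \<Longrightarrow> a * b \<in> poly_ring n"
proof -
  assume a: "a \<in> poly_ring n" and b: "b \<in> poly_ring n"
  { fix m assume m: "m \<in> Poly_Mapping.keys (a * b)"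
    then obtain u v where "m = u + v" "u \<in> Poly_Mapping.keys a" "v \<in> Poly_Mapping.keys b"
      using keys_mult by blast
    hence "Poly_Mapping.keys m \<subseteq> {1..n}" using a b keys_add[of u v] unfolding poly_ring_def by blast }
  thus ?thesis unfolding poly_ring_def by blast
qed
lemma pr_Var: "i \<in> {1..n} \<Longrightarrow> Var i \<in> poly_ring n"
  unfolding poly_ring_def Var_def by simp


lemma prod_Var: "(\<Prod>i\<in>T. Var i) = Poly_Mapping.single (\<Sum>i\<in>T. Poly_Mapping.single i 1) 1"
proof (cases "finite T")
  case True then show ?thesis
    by (induction T rule: finite_induct) (simp_all add: Var_def mult_single)
qed simp

lemma map_key_sum: "inj f \<Longrightarrow> Poly_Mapping.map_key f (sum g T) = (\<Sum>x\<in>T. Poly_Mapping.map_key f (g x))"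
proof (cases "finite T")
  case True
  assume f: "inj f"
  from True show ?thesis
    by (induction T rule: finite_induct) (simp_all add: map_key_plus[OF f] f)
qed simp

lemma inj_map_key_bij: assumes "bij (\<sigma>::nat\<Rightarrow>nat)" shows "inj (Poly_Mapping.map_key \<sigma> :: (nat \<Rightarrow>\<^sub>0 nat) \<Rightarrow> _)"
proof (rule inj_on_inverseI)
  fix m :: "nat \<Rightarrow>\<^sub>0 nat"
  have i1: "inj \<sigma>" "inj (inv \<sigma>)" using assms bij_is_inj bij_imp_bij_inv by auto
  have "Poly_Mapping.map_key (inv \<sigma>) (Poly_Mapping.map_key \<sigma> m) = Poly_Mapping.map_key (\<sigma> \<circ> inv \<sigma>) m"
    by (rule map_key_compose[OF i1(2) i1(1)])
  also have "\<sigma> \<circ> inv \<sigma> = (\<lambda>x. x)" by (rule ext) (simp add: surj_f_inv_f bij_is_surj[OF assms])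
  finally show "Poly_Mapping.map_key (inv \<sigma>) (Poly_Mapping.map_key \<sigma> m) = m" by (simp add: map_key_id)
qed

lemma perm_act_prod_Var:
  assumes "bij \<sigma>"
  shows "perm_act \<sigma> (\<Prod>i\<in>T. Var i) = (\<Prod>i\<in>\<sigma> ` T. Var i)"
proof -
  have inj: "inj \<sigma>" using assms bij_is_inj by auto
  have e: "Poly_Mapping.map_key \<sigma> (\<Sum>i\<in>T. Poly_Mapping.single (\<sigma> i) (1::nat)) = (\<Sum>i\<in>T. Poly_Mapping.single i 1)"
    by (simp add: map_key_sum[OF inj] inj)
  have "perm_act \<sigma> (\<Prod>i\<in>T. Var i) = Poly_Mapping.single (\<Sum>i\<in>T. Poly_Mapping.single (\<sigma> i) (1::nat)) 1"
    unfolding perm_act_def prod_Var e[symmetric]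
    by (rule map_key_single[OF inj_map_key_bij[OF assms]])
  also have "\<dots> = (\<Prod>i\<in>\<sigma> ` T. Var i)"
    unfolding prod_Var by (simp add: sum.reindex inj_on_subset[OF inj])
  finally show ?thesis .
qed

lemma perm_act_esym:
  assumes "bij \<sigma>"
  shows "perm_act \<sigma> (esym r S) = esym r (\<sigma> ` S)"
proof -
  have inj: "inj \<sigma>" using assms bij_is_inj by auto
  have injm: "inj (Poly_Mapping.map_key \<sigma> :: (nat \<Rightarrow>\<^sub>0 nat) \<Rightarrow> _)" by (rule inj_map_key_bij[OF assms])
  have "perm_act \<sigma> (esym r S) = (\<Sum>T\<in>{T. T \<subseteq> S \<and> card T = r}. \<Prod>i\<in>\<sigma> ` T. Var i)"
    unfolding esym_def perm_act_def map_key_sum[OF injm]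
    using perm_act_prod_Var[OF assms] unfolding perm_act_def by simp
  also have "\<dots> = (\<Sum>T\<in>(image \<sigma>) ` {T. T \<subseteq> S \<and> card T = r}. \<Prod>i\<in>T. Var i)"
    by (subst sum.reindex) (auto simp: inj_on_def inj_image_eq_iff[OF inj])
  also have "(image \<sigma>) ` {T. T \<subseteq> S \<and> card T = r} = {T. T \<subseteq> \<sigma> ` S \<and> card T = r}"
  proof (rule set_eqI, rule iffI)
    fix T assume "T \<in> (image \<sigma>) ` {T. T \<subseteq> S \<and> card T = r}"
    then obtain U where "U \<subseteq> S" "card U = r" "T = \<sigma> ` U" by auto
    thus "T \<in> {T. T \<subseteq> \<sigma> ` S \<and> card T = r}" using card_image[OF inj_on_subset[OF inj]] by auto
  next
    fix T assume "T \<in> {T. T \<subseteq> \<sigma> ` S \<and> card T = r}"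
    hence T: "T \<subseteq> \<sigma> ` S" "card T = r" by auto
    then obtain U where "U \<subseteq> S" "T = \<sigma> ` U" by (auto simp: subset_image_iff)
    moreover have "card U = r" using T calculation card_image[OF inj_on_subset[OF inj]] by auto
    ultimately show "T \<in> (image \<sigma>) ` {T. T \<subseteq> S \<and> card T = r}" by auto
  qed
  finally show ?thesis unfolding esym_def .
qed

lemma esym_insert:
  assumes "finite S" "x \<notin> S"
  shows "esym (Suc r) (insert x S) = esym (Suc r) S + Var x * esym r S"
proof -
  have split: "{T. T \<subseteq> insert x S \<and> card T = Suc r} =
     {T. T \<subseteq> S \<and> card T = Suc r} \<union> insert x ` {T. T \<subseteq> S \<and> card T = r}"
  proof (rule set_eqI, rule iffI)
    fix T assume T0: "T \<in> {T. T \<subseteq> insert x S \<and> card T = Suc r}"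
    show "T \<in> {T. T \<subseteq> S \<and> card T = Suc r} \<union> insert x ` {T. T \<subseteq> S \<and> card T = r}"
    proof (cases "x \<in> T")
      case True
      hence "T = insert x (T - {x})" "T - {x} \<subseteq> S" "card (T - {x}) = r"
        using T0 assms finite_subset[of T "insert x S"] by (auto simp: card_Diff_singleton)
      thus ?thesis by blast
    next
      case False thus ?thesis using T0 by auto
    qed
  next
    fix T assume "T \<in> {T. T \<subseteq> S \<and> card T = Suc r} \<union> insert x ` {T. T \<subseteq> S \<and> card T = r}"
    then show "T \<in> {T. T \<subseteq> insert x S \<and> card T = Suc r}"
    proof
      assume "T \<in> insert x ` {T. T \<subseteq> S \<and> card T = r}"
      then obtain U where U: "U \<subseteq> S" "card U = r" "T = insert x U" by auto
      hence "finite U" "x \<notin> U" using assms finite_subset by auto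
      thus ?thesis using U by auto
    qed auto
  qed
  have fin: "finite {T. T \<subseteq> S \<and> card T = k}" for k using assms(1) by auto
  have disj: "{T. T \<subseteq> S \<and> card T = Suc r} \<inter> insert x ` {T. T \<subseteq> S \<and> card T = r} = {}"
    using assms(2) by auto
  have inj: "inj_on (insert x) {T. T \<subseteq> S \<and> card T = r}"
    unfolding inj_on_def using assms(2) by (metis insert_ident mem_Collect_eq subsetD)
  have "esym (Suc r) (insert x S) = esym (Suc r) S + (\<Sum>T\<in>insert x ` {T. T \<subseteq> S \<and> card T = r}. \<Prod>i\<in>T. Var i)"
    unfolding esym_def split by (rule sum.union_disjoint) (use fin disj in auto)
  also have "(\<Sum>T\<in>insert x ` {T. T \<subseteq> S \<and> card T = r}. \<Prod>i\<in>T. Var i) = Var x * esym r S"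
    unfolding esym_def sum.reindex[OF inj] sum_distrib_left
  proof (rule sum.cong)
    fix T assume "T \<in> {T. T \<subseteq> S \<and> card T = r}"
    hence "finite T" "x \<notin> T" using assms finite_subset by auto
    thus "((\<lambda>T. \<Prod>i\<in>T. Var i) \<circ> insert x) T = Var x * (\<Prod>i\<in>T. Var i)" by simp
  qed simp
  finally show ?thesis .
qed

lemma esym_big: "finite S \<Longrightarrow> card S < r \<Longrightarrow> esym r S = 0"
  unfolding esym_def
proof -
  assume "finite S" "card S < r"
  have "card T \<noteq> r" if "T \<subseteq> S" for T using card_mono[OF \<open>finite S\<close> that] \<open>card S < r\<close> by linarith
  hence E: "{T. T \<subseteq> S \<and> card T = r} = {}" by auto
  show "(\<Sum>T | T \<subseteq> S \<and> card T = r. \<Prod>i\<in>T. Var i) = 0" by (simp only: E sum.empty)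
qed

lemma exists_perm:
  assumes "S \<subseteq> {1..n::nat}" "card S = m"
  shows "\<exists>\<sigma>. \<sigma> permutes {1..n} \<and> \<sigma> ` {1..m} = S"
proof -
  have mn: "m \<le> n" using assms card_mono[of "{1..n}" S] by auto
  obtain f where f: "bij_betw f {1..m} S"
    using finite_same_card_bij[of "{1..m}" S] assms finite_subset by auto
  have "card ({1..n} - S) = n - m" using assms by (simp add: card_Diff_subset finite_subset)
  moreover have "card {m+1..n} = n - m" by simp
  ultimately obtain g where g: "bij_betw g {m+1..n} ({1..n} - S)"
    using finite_same_card_bij[of "{m+1..n}" "{1..n} - S"] by auto
  define \<sigma> where "\<sigma> x = (if x \<in> {1..m} then f x else if x \<in> {m+1..n} then g x else x)" for x
  have "bij_betw \<sigma> ({1..m} \<union> {m+1..n}) (S \<union> ({1..n} - S))"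
  proof (rule bij_betw_combine)
    show "bij_betw \<sigma> {1..m} S" using f by (rule bij_betw_cong[THEN iffD1, rotated]) (auto simp: \<sigma>_def)
    show "bij_betw \<sigma> {m+1..n} ({1..n} - S)" using g by (rule bij_betw_cong[THEN iffD1, rotated]) (auto simp: \<sigma>_def)
  qed auto
  moreover have "{1..m} \<union> {m+1..n} = {1..n}" using mn by auto
  moreover have "S \<union> ({1..n} - S) = {1..n}" using assms by auto
  ultimately have b: "bij_betw \<sigma> {1..n} {1..n}" by simp
  have "\<sigma> permutes {1..n}" by (rule bij_imp_permutes[OF b]) (use mn in \<open>auto simp: \<sigma>_def\<close>)
  moreover have "\<sigma> ` {1..m} = S" using f bij_betw_imp_surj_on[OF f] by (auto simp: \<sigma>_def)
  ultimately show ?thesis by blast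
qed


lemma part_nth_le_n: "is_partition \<mu> n \<Longrightarrow> k < length \<mu> \<Longrightarrow> \<mu> ! k \<le> n"
  unfolding is_partition_def using elem_le_sum_list by blast

lemma part_nth_le_part1: "is_partition \<mu> n \<Longrightarrow> k < length \<mu> \<Longrightarrow> \<mu> ! k \<le> part1 \<mu>"
  unfolding is_partition_def part1_def
  by (cases k) (auto dest: sorted_wrt_nth_less)

lemma part1_le: "is_partition \<mu> n \<Longrightarrow> part1 \<mu> \<le> n"
  unfolding part1_def using part_nth_le_n[of \<mu> n 0] by auto

lemma conj_zero: "is_partition \<mu> n \<Longrightarrow> part1 \<mu> < j \<Longrightarrow> conj \<mu> j = 0"
  unfolding conj_def using part_nth_le_part1[of \<mu> n] by fastforce

lemma conj_pos: "is_partition \<mu> n \<Longrightarrow> 1 \<le> j \<Longrightarrow> j \<le> part1 \<mu> \<Longrightarrow> 1 \<le> conj \<mu> j"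
proof -
  assume a: "is_partition \<mu> n" "1 \<le> j" "j \<le> part1 \<mu>"
  hence ne: "\<mu> \<noteq> []" unfolding part1_def by (cases "\<mu> = []") auto
  hence "0 \<in> {k. k < length \<mu> \<and> j \<le> \<mu> ! k}" using a unfolding part1_def by auto
  moreover have "finite {k. k < length \<mu> \<and> j \<le> \<mu> ! k}" by auto
  ultimately show ?thesis unfolding conj_def
    by (metis One_nat_def Suc_leI card_gt_0_iff empty_iff)
qed

lemma conj_sum: assumes P: "is_partition \<mu> n" shows "(\<Sum>j\<in>{1..n}. conj \<mu> j) = n"
proof -
  have c: "conj \<mu> j = (\<Sum>k<length \<mu>. if j \<le> \<mu> ! k then 1 else 0)" for j
  proof -
    have "conj \<mu> j = card {k\<in>{..<length \<mu>}. j \<le> \<mu> ! k}" unfolding conj_def by (rule arg_cong[of _ _ card]) auto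
    also have "\<dots> = (\<Sum>k\<in>{k\<in>{..<length \<mu>}. j \<le> \<mu> ! k}. 1)" by simp
    also have "\<dots> = (\<Sum>k<length \<mu>. if j \<le> \<mu> ! k then 1 else 0)" by (rule sum.inter_filter) simp
    finally show ?thesis .
  qed
  have d: "(\<Sum>j\<in>{1..n}. (if j \<le> \<mu> ! k then 1 else 0)) = \<mu> ! k" if "k < length \<mu>" for k
  proof -
    have "(\<Sum>j\<in>{1..n}. (if j \<le> \<mu> ! k then 1 else 0)) = (\<Sum>j\<in>{j\<in>{1..n}. j \<le> \<mu> ! k}. 1::nat)"
      by (rule sum.inter_filter[symmetric]) simp
    also have "{j\<in>{1..n}. j \<le> \<mu> ! k} = {1..\<mu> ! k}" using part_nth_le_n[OF P that] by auto
    finally show ?thesis by simp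
  qed
  have "(\<Sum>j\<in>{1..n}. conj \<mu> j) = (\<Sum>k<length \<mu>. \<Sum>j\<in>{1..n}. (if j \<le> \<mu> ! k then 1 else 0))"
    unfolding c by (rule sum.swap)
  also have "\<dots> = (\<Sum>k<length \<mu>. \<mu> ! k)" using d by simp
  also have "\<dots> = sum_list \<mu>" by (simp add: sum_list_sum_nth atLeast0LessThan)
  finally show ?thesis using P unfolding is_partition_def by simp
qed

lemma key_eq:
  assumes P: "is_partition \<mu> n" and i: "i < part1 \<mu>"
  shows "int (n - i) - int (dk \<mu> n (n - i)) = int (dunder \<mu> i) - 1"
proof -
  have iN: "i \<le> n" using part1_le[OF P] i by simp
  have dk: "dk \<mu> n (n - i) = (\<Sum>j\<in>{i+1..n}. conj \<mu> j)" unfolding dk_def using iN by simp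
  have "{1..n} = {1..i} \<union> {i+1..n}" using iN by auto
  hence split: "n = (\<Sum>j\<in>{1..i}. conj \<mu> j) + (\<Sum>j\<in>{i+1..n}. conj \<mu> j)"
    using conj_sum[OF P] by (simp add: sum.union_disjoint[symmetric] ivl_disj_int)
  have "int (dunder \<mu> i) = 1 + (\<Sum>j\<in>{1..i}. int (conj \<mu> j) - 1)"
    unfolding dunder_def using conj_pos[OF P _ ] i by (simp add: of_nat_diff)
  also have "\<dots> = 1 + (\<Sum>j\<in>{1..i}. int (conj \<mu> j)) - int i" by (simp add: sum_subtractf)
  finally have du: "int (dunder \<mu> i) = 1 + (\<Sum>j\<in>{1..i}. int (conj \<mu> j)) - int i" .
  have "int n = (\<Sum>j\<in>{1..i}. int (conj \<mu> j)) + (\<Sum>j\<in>{i+1..n}. int (conj \<mu> j))"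
    using arg_cong[OF split, of int] by (simp only: of_nat_add of_nat_sum)
  thus ?thesis unfolding dk du using iN by (simp add: of_nat_diff of_nat_sum)
qed


lemma dunder_mono: "dunder \<mu> i \<le> dunder \<mu> (Suc i)"
  unfolding dunder_def by simp

theorem lemma2p1:
  fixes \<mu> :: "nat list" and n :: nat
  assumes "is_partition \<mu> n"
  shows "tanisaki_ideal \<mu> n =
    ideal_in (poly_ring n)
      {perm_act \<sigma> g | \<sigma> g. \<sigma> permutes {1..n} \<and>
         g \<in> {esym (dunder \<mu> i) {1..n-i} | i. 1 \<le> i \<and> i \<le> part1 \<mu> - 1}
              \<union> {esym r {1..n} | r. 1 \<le> r \<and> r \<le> n}}"
    (is "_ = ideal_in ?R ?GEN")
proof -
  note P = assms
  let ?J = "ideal_in ?R ?GEN"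
  have gen_in: "x \<in> ?GEN \<Longrightarrow> x \<in> ?J" for x by (rule ideal_gen[OF pr_one])
  have addJ: "p \<in> ?J \<Longrightarrow> q \<in> ?J \<Longrightarrow> p + q \<in> ?J" for p q
    by (rule ideal_add) (auto intro: pr_add pr_zero)
  have multJ: "a \<in> ?R \<Longrightarrow> p \<in> ?J \<Longrightarrow> a * p \<in> ?J" for a p
    by (rule ideal_mult) (auto intro: pr_mult)
  have p1n: "part1 \<mu> \<le> n" by (rule part1_le[OF P])
  have claim: "\<forall>S r. i < part1 \<mu> \<longrightarrow> S \<subseteq> {1..n} \<longrightarrow> card S = n - i \<longrightarrow> dunder \<mu> i \<le> r \<longrightarrow> esym r S \<in> ?J" for i
  proof (induction i)
    case 0
    show ?case
    proof (intro allI impI)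
      fix S r assume a: "0 < part1 \<mu>" "S \<subseteq> {1..n}" "card S = n - 0" "dunder \<mu> 0 \<le> r"
      have S: "S = {1..n}" using a by (intro card_subset_eq) auto
      have r: "1 \<le> r" using a(4) unfolding dunder_def by simp
      show "esym r S \<in> ?J"
      proof (cases "r \<le> n")
        case True
        have "esym r {1..n} \<in> {esym r {1..n} | r. 1 \<le> r \<and> r \<le> n}" using True r by blast
        hence "perm_act id (esym r {1..n}) \<in> ?GEN" unfolding mem_Collect_eq
          by (intro exI[of _ id] exI[of _ "esym r {1..n}"] conjI refl permutes_id) blast
        moreover have "perm_act id (esym r {1..n}) = esym r S" using S by (simp add: perm_act_esym)
        ultimately show ?thesis using gen_in by simp
      next
        case False thus ?thesis using S esym_big[of S r] ideal_zero by simp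
      qed
    qed
  next
    case (Suc i)
    show ?case
    proof (intro allI impI)
      fix S r assume a: "Suc i < part1 \<mu>" "S \<subseteq> {1..n}" "card S = n - Suc i" "dunder \<mu> (Suc i) \<le> r"
      have finS: "finite S" using a(2) finite_subset by blast
      from a(4) show "esym r S \<in> ?J"
      proof (induction r rule: dec_induct)
        case base
        obtain \<sigma> where \<sigma>: "\<sigma> permutes {1..n}" "\<sigma> ` {1..n - Suc i} = S"
          using exists_perm[OF a(2,3)] by blast
        have "esym (dunder \<mu> (Suc i)) {1..n - Suc i} \<in> {esym (dunder \<mu> i) {1..n-i} | i. 1 \<le> i \<and> i \<le> part1 \<mu> - 1}"
          using a(1) by (intro CollectI exI[of _ "Suc i"]) simp
        hence "perm_act \<sigma> (esym (dunder \<mu> (Suc i)) {1..n - Suc i}) \<in> ?GEN" unfolding mem_Collect_eq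
          by (intro exI[of _ \<sigma>] exI[of _ "esym (dunder \<mu> (Suc i)) {1..n - Suc i}"] conjI refl \<sigma>(1)) blast
        moreover have "perm_act \<sigma> (esym (dunder \<mu> (Suc i)) {1..n - Suc i}) = esym (dunder \<mu> (Suc i)) S"
          using \<sigma> by (simp add: perm_act_esym permutes_bij)
        ultimately show ?case using gen_in by simp
      next
        case (step r)
        have "card S < card {1..n}" using a(1,3) p1n by simp
        hence "S \<noteq> {1..n}" by auto
        hence "\<not> {1..n} \<subseteq> S" using a(2) by blast
        then obtain x where x: "x \<in> {1..n}" "x \<notin> S" by blast
        have "esym (Suc r) (insert x S) \<in> ?J"
        proof -
          have c1: "card (insert x S) = Suc (card S)" using x(2) finS by simp
          have c2: "card (insert x S) = n - i" unfolding c1 a(3) using a(1) p1n by linarith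
          have d: "dunder \<mu> i \<le> Suc r" using dunder_mono[of \<mu> i] step(1) by linarith
          have s: "insert x S \<subseteq> {1..n}" using a(2) x(1) by blast
          have ii: "i < part1 \<mu>" using a(1) by linarith
          show ?thesis using Suc.IH ii s c2 d by blast
        qed
        moreover have "(- Var x) * esym r S \<in> ?J" using multJ[OF pr_uminus[OF pr_Var[OF x(1)]] step(3)] .
        ultimately have "esym (Suc r) (insert x S) + (- Var x) * esym r S \<in> ?J" by (rule addJ)
        moreover have "esym (Suc r) (insert x S) + (- Var x) * esym r S = esym (Suc r) S"
          using esym_insert[OF finS x(2)] by simp
        ultimately show ?case by simp
      qed
    qed
  qed
  show ?thesis
  proof
    show "tanisaki_ideal \<mu> n \<subseteq> ?J"
      unfolding tanisaki_ideal_def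
    proof (rule ideal_mono[OF pr_add pr_zero pr_mult], assumption+, rule subsetI)
      fix p assume "p \<in> tanisaki_gens \<mu> n"
      then obtain r S where p: "p = esym r S" "S \<subseteq> {1..n}"
        "int (card S) - int (dk \<mu> n (card S)) < int r" "r \<le> card S"
        unfolding tanisaki_gens_def by blast
      define i where "i = n - card S"
      have kn: "card S \<le> n" using card_mono[OF _ p(2)] by simp
      have ci: "card S = n - i" using kn unfolding i_def by simp
      show "p \<in> ?J"
      proof (cases "i < part1 \<mu>")
        case True
        have "int (dunder \<mu> i) - 1 < int r" using key_eq[OF P True] p(3) ci by simp
        thus ?thesis using claim[of i] True p ci by auto
      next
        case False
        have "dk \<mu> n (card S) = 0" unfolding dk_def
          using conj_zero[OF P] False kn unfolding i_def by (intro sum.neutral) auto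
        thus ?thesis using p(3,4) by simp
      qed
    qed
  next
    show "?J \<subseteq> tanisaki_ideal \<mu> n"
      unfolding tanisaki_ideal_def
    proof (rule ideal_mono[OF pr_add pr_zero pr_mult], assumption+, rule subsetI)
      fix p assume "p \<in> ?GEN"
      then obtain \<sigma> g where pg: "p = perm_act \<sigma> g" "\<sigma> permutes {1..n}"
        "g \<in> {esym (dunder \<mu> i) {1..n-i} | i. 1 \<le> i \<and> i \<le> part1 \<mu> - 1}
              \<union> {esym r {1..n} | r. 1 \<le> r \<and> r \<le> n}" by blast
      have bij: "bij \<sigma>" using pg(2) permutes_bij by blast
      have injs: "inj \<sigma>" using bij bij_is_inj by blast
      have im: "\<sigma> ` {1..n} = {1..n}" using pg(2) permutes_image by blast
      have gen: "esym r S \<in> ideal_in ?R (tanisaki_gens \<mu> n)"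
        if "S \<subseteq> {1..n}" "int (card S) - int (dk \<mu> n (card S)) < int r" for r S
      proof (cases "r \<le> card S")
        case True
        hence "esym r S \<in> tanisaki_gens \<mu> n" unfolding tanisaki_gens_def using that by blast
        thus ?thesis by (rule ideal_gen[OF pr_one])
      next
        case False
        thus ?thesis using esym_big[of S r] finite_subset[OF that(1)] ideal_zero by simp
      qed
      from pg(3) show "p \<in> ideal_in ?R (tanisaki_gens \<mu> n)"
      proof
        assume "g \<in> {esym (dunder \<mu> i) {1..n-i} | i. 1 \<le> i \<and> i \<le> part1 \<mu> - 1}"
        then obtain i where i: "g = esym (dunder \<mu> i) {1..n-i}" "1 \<le> i" "i \<le> part1 \<mu> - 1" by blast
        have ip: "i < part1 \<mu>" using i by simp
        have "\<sigma> ` {1..n-i} \<subseteq> \<sigma> ` {1..n}" by (rule image_mono) auto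
        hence S: "\<sigma> ` {1..n-i} \<subseteq> {1..n}" using im by simp
        have c: "card (\<sigma> ` {1..n-i}) = n - i" using card_image[OF inj_on_subset[OF injs]] by simp
        have "p = esym (dunder \<mu> i) (\<sigma> ` {1..n-i})" using pg(1) i(1) by (simp add: perm_act_esym bij)
        moreover have "int (card (\<sigma> ` {1..n-i})) - int (dk \<mu> n (card (\<sigma> ` {1..n-i}))) < int (dunder \<mu> i)"
          unfolding c using key_eq[OF P ip] by simp
        ultimately show ?thesis using gen[OF S] by simp
      next
        assume "g \<in> {esym r {1..n} | r. 1 \<le> r \<and> r \<le> n}"
        then obtain r where r: "g = esym r {1..n}" "1 \<le> r" "r \<le> n" by blast
        have "p = esym r {1..n}" using pg(1) r(1) im by (simp add: perm_act_esym bij)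
        moreover have "dk \<mu> n n = n" unfolding dk_def using conj_sum[OF P] by simp
        moreover have "int (card {1..n}) - int (dk \<mu> n (card {1..n})) < int r" using r calculation(2) by simp
        ultimately show ?thesis using gen[of "{1..n}" r] by simp
      qed
    qed
  qed
qed

end
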